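(* Let $G$ be a connected bipartite graph, $v\in V(G)$, and let $c_0$ be the mill-pond configuration $MP(v)$, i.e. $c_0(v)=1$ and $c_0(x)=0$ for all $x\neq v$. Then for every $t\geq0$, $c_t(v)=1$ if $t$ is even and $c_t(v)=1-\deg(v)$ if $t$ is odd. Moreover, for $i\in\{1,2,\ldots,\epsilon(v)\}$ and $x\in N_i(v)$, \[c_t(x)=\begin{cases}0 & t<i,\\ \deg^+(x) & t\geq i \text{ and } t-i\equiv 0 \pmod 2,\\ -\deg^-(x) & t\geq i \text{ and } t-i\equiv 1\pmod 2.\end{cases}\]
   Context: Diffusion process: for a finite simple graph $G$ and a chip configuration $c_t:V(G)\to\mathbb{Z}$ (negative values allowed), the next configuration is defined simultaneously for every vertex $u$ by $c_{t+1}(u)=c_t(u)-|\{w\in N(u): c_t(u)>c_t(w)\}|+|\{w\in N(u): c_t(u)<c_t(w)\}|$. $\epsilon(v)=\max_{w\in V(G)} d(v,w)$ is the eccentricity of $v$. For $i\geq0$, $N_i(v)$ is the set of vertices at distance exactly $i$ from $v$ (so $N_0(v)=\{v\}$). For $x\in N_i(v)$ with $i\geq1$, $\deg^+(x)=|N(x)\cap N_{i-1}(v)|$; for $x\in N_i(v)$ with $i\geq0$, $\deg^-(x)=|N(x)\cap N_{i+1}(v)|$. *)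

theory Defs
  imports Main
begin

definition simple_graph :: "'a set \<Rightarrow> ('a \<Rightarrow> 'a \<Rightarrow> bool) \<Rightarrow> bool" where
  "simple_graph V E \<longleftrightarrow> finite V \<and> (\<forall>u w. E u w \<longrightarrow> u \<in> V \<and> w \<in> V)
     \<and> (\<forall>u w. E u w \<longrightarrow> E w u) \<and> (\<forall>u. \<not> E u u)"

definition nbrs :: "'a set \<Rightarrow> ('a \<Rightarrow> 'a \<Rightarrow> bool) \<Rightarrow> 'a \<Rightarrow> 'a set" where
  "nbrs V E u = {w \<in> V. E u w}"

definition degree :: "'a set \<Rightarrow> ('a \<Rightarrow> 'a \<Rightarrow> bool) \<Rightarrow> 'a \<Rightarrow> nat" where
  "degree V E u = card (nbrs V E u)"

definition is_walk :: "'a set \<Rightarrow> ('a \<Rightarrow> 'a \<Rightarrow> bool) \<Rightarrow> 'a list \<Rightarrow> bool" where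
  "is_walk V E xs \<longleftrightarrow> xs \<noteq> [] \<and> set xs \<subseteq> V \<and> (\<forall>i. Suc i < length xs \<longrightarrow> E (xs ! i) (xs ! Suc i))"

definition walk_of_len :: "'a set \<Rightarrow> ('a \<Rightarrow> 'a \<Rightarrow> bool) \<Rightarrow> 'a \<Rightarrow> 'a \<Rightarrow> nat \<Rightarrow> bool" where
  "walk_of_len V E u w n \<longleftrightarrow> (\<exists>xs. is_walk V E xs \<and> hd xs = u \<and> last xs = w \<and> length xs = Suc n)"

definition connected_graph :: "'a set \<Rightarrow> ('a \<Rightarrow> 'a \<Rightarrow> bool) \<Rightarrow> bool" where
  "connected_graph V E \<longleftrightarrow> (\<forall>u\<in>V. \<forall>w\<in>V. \<exists>n. walk_of_len V E u w n)"

definition bipartite :: "'a set \<Rightarrow> ('a \<Rightarrow> 'a \<Rightarrow> bool) \<Rightarrow> bool" where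
  "bipartite V E \<longleftrightarrow> (\<exists>f :: 'a \<Rightarrow> bool. \<forall>u w. E u w \<longrightarrow> f u \<noteq> f w)"

text \<open>Graph distance (meaningful for connected graphs).\<close>
definition dist :: "'a set \<Rightarrow> ('a \<Rightarrow> 'a \<Rightarrow> bool) \<Rightarrow> 'a \<Rightarrow> 'a \<Rightarrow> nat" where
  "dist V E u w = (LEAST n. walk_of_len V E u w n)"

definition ecc :: "'a set \<Rightarrow> ('a \<Rightarrow> 'a \<Rightarrow> bool) \<Rightarrow> 'a \<Rightarrow> nat" where
  "ecc V E v = Max (dist V E v ` V)"

definition layer :: "'a set \<Rightarrow> ('a \<Rightarrow> 'a \<Rightarrow> bool) \<Rightarrow> 'a \<Rightarrow> nat \<Rightarrow> 'a set" where
  "layer V E v i = {x \<in> V. dist V E v x = i}"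

definition deg_plus :: "'a set \<Rightarrow> ('a \<Rightarrow> 'a \<Rightarrow> bool) \<Rightarrow> 'a \<Rightarrow> 'a \<Rightarrow> nat" where
  "deg_plus V E v x = card (nbrs V E x \<inter> layer V E v (dist V E v x - 1))"

definition deg_minus :: "'a set \<Rightarrow> ('a \<Rightarrow> 'a \<Rightarrow> bool) \<Rightarrow> 'a \<Rightarrow> 'a \<Rightarrow> nat" where
  "deg_minus V E v x = card (nbrs V E x \<inter> layer V E v (dist V E v x + 1))"

definition diffusion_step :: "'a set \<Rightarrow> ('a \<Rightarrow> 'a \<Rightarrow> bool) \<Rightarrow> ('a \<Rightarrow> int) \<Rightarrow> ('a \<Rightarrow> int)" where
  "diffusion_step V E c = (\<lambda>u. c u - int (card {w \<in> nbrs V E u. c u > c w})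
                               + int (card {w \<in> nbrs V E u. c u < c w}))"

definition diffusion :: "'a set \<Rightarrow> ('a \<Rightarrow> 'a \<Rightarrow> bool) \<Rightarrow> ('a \<Rightarrow> int) \<Rightarrow> nat \<Rightarrow> ('a \<Rightarrow> int)" where
  "diffusion V E c0 t = (diffusion_step V E ^^ t) c0"

definition mill_pond :: "'a \<Rightarrow> 'a \<Rightarrow> int" where
  "mill_pond v = (\<lambda>x. if x = v then 1 else 0)"

end

theory Submission imports Defs begin

lemma walk0: "walk_of_len V E u w 0 \<longleftrightarrow> u \<in> V \<and> w = u"
  unfolding walk_of_len_def is_walk_def
proof
  assume "\<exists>xs. (xs \<noteq> [] \<and> set xs \<subseteq> V \<and> (\<forall>i. Suc i < length xs \<longrightarrow> E (xs ! i) (xs ! Suc i))) \<and> hd xs = u \<and> last xs = w \<and> length xs = Suc 0"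
  then obtain xs where "set xs \<subseteq> V" "hd xs = u" "last xs = w" "length xs = 1" by auto
  then show "u \<in> V \<and> w = u" by (cases xs) auto
next
  assume "u \<in> V \<and> w = u"
  then show "\<exists>xs. (xs \<noteq> [] \<and> set xs \<subseteq> V \<and> (\<forall>i. Suc i < length xs \<longrightarrow> E (xs ! i) (xs ! Suc i))) \<and> hd xs = u \<and> last xs = w \<and> length xs = Suc 0"
    by (intro exI[of _ "[u]"]) auto
qed

lemma walkSuc:
  assumes sg: "simple_graph V E"
  shows "walk_of_len V E u w (Suc n) \<longleftrightarrow> (\<exists>z. walk_of_len V E u z n \<and> E z w)"
proof
  assume "walk_of_len V E u w (Suc n)"
  then obtain xs where W: "is_walk V E xs" "hd xs = u" "last xs = w" "length xs = Suc (Suc n)"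
    unfolding walk_of_len_def by auto
  define ys where "ys = butlast xs"
  have ly: "length ys = Suc n" using W(4) unfolding ys_def by simp
  have xs: "xs = ys @ [w]" using W(3,4) unfolding ys_def
    by (metis append_butlast_last_id list.size(3) nat.simps(3))
  have "is_walk V E ys" using W(1) ly unfolding is_walk_def xs
    apply (auto simp: nth_append)
    by (metis less_SucI)
  moreover have "hd ys = u" using W(2) ly xs by (cases ys) auto
  moreover have "E (last ys) w"
  proof -
    have "E (xs ! n) (xs ! Suc n)" using W(1,4) unfolding is_walk_def by auto
    moreover have "xs ! n = last ys" using ly xs
      by (metis diff_Suc_1 last_conv_nth lessI list.size(3) nat.simps(3) nth_append)
    moreover have "xs ! Suc n = w" using ly xs by (simp add: nth_append)
    ultimately show ?thesis by simp
  qed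
  ultimately show "\<exists>z. walk_of_len V E u z n \<and> E z w"
    using ly unfolding walk_of_len_def by blast
next
  assume "\<exists>z. walk_of_len V E u z n \<and> E z w"
  then obtain z ys where Y: "is_walk V E ys" "hd ys = u" "last ys = z" "length ys = Suc n" "E z w"
    unfolding walk_of_len_def by auto
  have wV: "w \<in> V" using sg Y(5) unfolding simple_graph_def by blast
  have "is_walk V E (ys @ [w])" using Y wV unfolding is_walk_def
    by (auto simp: nth_append last_conv_nth less_Suc_eq)
  moreover have "hd (ys @ [w]) = u" using Y by (cases ys) auto
  ultimately show "walk_of_len V E u w (Suc n)" using Y unfolding walk_of_len_def
    by (intro exI[of _ "ys @ [w]"]) auto
qed


locale G =
  fixes V :: "'a set" and E :: "'a \<Rightarrow> 'a \<Rightarrow> bool" and v :: 'a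
  assumes sg: "simple_graph V E" and conn: "connected_graph V E"
    and bip: "bipartite V E" and vV: "v \<in> V"
begin

abbreviation "d x \<equiv> dist V E v x"

lemma finV: "finite V" and EV: "E x y \<Longrightarrow> x \<in> V \<and> y \<in> V"
  and Esym: "E x y \<Longrightarrow> E y x" and Eirr: "\<not> E x x"
  using sg unfolding simple_graph_def by blast+

lemma walk_d: "x \<in> V \<Longrightarrow> walk_of_len V E v x (d x)"
  unfolding dist_def using conn vV unfolding connected_graph_def by (meson LeastI)

lemma d_le: "walk_of_len V E v x n \<Longrightarrow> d x \<le> n"
  unfolding dist_def by (rule Least_le)

lemma d_v: "d v = 0"
  using d_le[of v 0] walk0[of V E v v] vV by simp

lemma d0: "x \<in> V \<Longrightarrow> d x = 0 \<Longrightarrow> x = v"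
  using walk_d[of x] walk0 by fastforce

lemma parity: "walk_of_len V E u w n \<Longrightarrow> f u \<noteq> f w \<longleftrightarrow> odd n" if "\<forall>u w. E u w \<longrightarrow> f u \<noteq> f w" for f :: "'a \<Rightarrow> bool"
proof (induction n arbitrary: w)
  case 0 then show ?case using walk0[of V E u w] by simp
next
  case (Suc n)
  then obtain z where "walk_of_len V E u z n" "E z w" using walkSuc[OF sg] by metis
  then have "(f u \<noteq> f z) = odd n" "f z \<noteq> f w" using Suc.IH that by auto
  then show ?case by auto
qed

lemma d_step: "E x y \<Longrightarrow> d y \<le> d x + 1"
  using walk_d[of x] EV[of x y] walkSuc[OF sg] d_le by (metis Suc_eq_plus1)

lemma aux: "odd (Suc a) = odd (b::nat) \<Longrightarrow> b \<le> a+1 \<Longrightarrow> a \<le> b+1 \<Longrightarrow> b = a+1 \<or> (a \<ge> 1 \<and> b = a - 1)"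
  by presburger

lemma aux2: "b = a+1 \<or> (1 \<le> a \<and> b = a-1) \<Longrightarrow> a \<le> t \<Longrightarrow> even (t-a) \<Longrightarrow> \<not> t < b \<Longrightarrow> odd (t - (b::nat))"
  by (elim disjE conjE; simp; metis Suc_diff_Suc even_Suc le_less_Suc_eq not_less_eq_eq Suc_pred' diff_Suc_Suc le_add_diff_inverse2 One_nat_def)
lemma aux3: "b = a+1 \<or> (1 \<le> a \<and> b = a-1) \<Longrightarrow> a \<le> t \<Longrightarrow> odd (t-a) \<Longrightarrow> b \<le> t \<and> even (t - (b::nat))"
proof -
  assume A: "b = a+1 \<or> (1 \<le> a \<and> b = a-1)" "a \<le> t" "odd (t-a)"
  then have "a < t" by (metis diff_is_0_eq even_zero le_neq_implies_less)
  then obtain k where k: "t = a + Suc k" by (metis less_imp_Suc_add add_Suc_right)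
  then have "odd (Suc k)" using A by simp
  then show ?thesis using A k by auto
qed
lemma aux4: "(a::nat) \<le> t \<Longrightarrow> even (t-a) \<Longrightarrow> odd (Suc t - a)"
  by (simp add: Suc_diff_le)
lemma aux5: "(a::nat) \<le> t \<Longrightarrow> odd (t-a) \<Longrightarrow> even (Suc t - a)"
  by (simp add: Suc_diff_le)

lemma nb: assumes "E x y" shows "y \<in> V \<and> (d y = d x + 1 \<or> (d x \<ge> 1 \<and> d y = d x - 1))"
proof -
  obtain f :: "'a \<Rightarrow> bool" where f: "\<forall>u w. E u w \<longrightarrow> f u \<noteq> f w" using bip unfolding bipartite_def by blast
  have xV: "x \<in> V" and yV: "y \<in> V" using EV assms by auto
  have w1: "walk_of_len V E v y (Suc (d x))" using walk_d[OF xV] assms walkSuc[OF sg] by blast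
  have "f v \<noteq> f y \<longleftrightarrow> odd (Suc (d x))" using parity[OF f w1] .
  moreover have "f v \<noteq> f y \<longleftrightarrow> odd (d y)" using parity[OF f walk_d[OF yV]] .
  ultimately have "odd (Suc (d x)) = odd (d y)" by simp
  moreover have "d y \<le> d x + 1" "d x \<le> d y + 1" using d_step assms Esym by auto
  ultimately show ?thesis using yV aux by blast
qed

lemma has_parent: assumes xV: "x \<in> V" and "d x \<ge> 1"
  shows "\<exists>y. E x y \<and> d y = d x - 1"
proof -
  obtain n where n: "d x = Suc n" using assms by (cases "d x") auto
  then obtain z where "walk_of_len V E v z n" "E z x" using walk_d[OF xV] walkSuc[OF sg] by metis
  then have "d z \<le> n" "E x z" using d_le Esym by auto
  moreover have "d x \<le> d z + 1" using d_step[OF \<open>E x z\<close>[THEN Esym]] .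
  ultimately show ?thesis using n by (intro exI[of _ z]) auto
qed

lemma fin_nbrs: "finite (nbrs V E x)" using finV unfolding nbrs_def by auto

lemma nbrs_E: "y \<in> nbrs V E x \<longleftrightarrow> E x y"
  unfolding nbrs_def using EV by auto

lemma deg_plus_pos: "x \<in> V \<Longrightarrow> d x \<ge> 1 \<Longrightarrow> deg_plus V E v x \<ge> 1"
proof -
  assume "x \<in> V" "d x \<ge> 1"
  then obtain y where "E x y" "d y = d x - 1" using has_parent by blast
  then have "y \<in> nbrs V E x \<inter> layer V E v (d x - 1)"
    using nbrs_E EV unfolding layer_def by auto
  then show ?thesis unfolding deg_plus_def using fin_nbrs
    by (metis One_nat_def Suc_leI card_gt_0_iff empty_iff finite_Int)
qed

lemma deg_minus_pos: "E x y \<Longrightarrow> d y = d x + 1 \<Longrightarrow> deg_minus V E v x \<ge> 1"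
proof -
  assume "E x y" "d y = d x + 1"
  then have "y \<in> nbrs V E x \<inter> layer V E v (d x + 1)"
    using nbrs_E EV unfolding layer_def by auto
  then show ?thesis unfolding deg_minus_def using fin_nbrs
    by (metis One_nat_def Suc_leI card_gt_0_iff empty_iff finite_Int)
qed

lemma deg_split: "x \<in> V \<Longrightarrow> degree V E x = deg_plus V E v x + deg_minus V E v x"
proof -
  assume xV: "x \<in> V"
  have U: "nbrs V E x = (nbrs V E x \<inter> layer V E v (d x - 1)) \<union> (nbrs V E x \<inter> layer V E v (d x + 1))"
    using nb nbrs_E unfolding layer_def by auto
  have D: "(nbrs V E x \<inter> layer V E v (d x - 1)) \<inter> (nbrs V E x \<inter> layer V E v (d x + 1)) = {}"
    unfolding layer_def by auto
  show ?thesis unfolding degree_def deg_plus_def deg_minus_def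
    by (subst U, rule card_Un_disjoint) (use fin_nbrs D in auto)
qed

lemma deg_plus_v: "deg_plus V E v v = 0"
proof -
  have "nbrs V E v \<inter> layer V E v 0 = {}"
    unfolding layer_def using d0 nbrs_E Eirr by auto
  then show ?thesis unfolding deg_plus_def d_v by simp
qed

definition b :: "'a \<Rightarrow> int" where "b x = (if x = v then 1 else 0)"

definition F :: "nat \<Rightarrow> 'a \<Rightarrow> int" where
  "F t x = (if t < d x then 0 else if even (t - d x) then int (deg_plus V E v x) + b x
            else b x - int (deg_minus V E v x))"

lemma pos: "x \<in> V \<Longrightarrow> d x \<le> t \<Longrightarrow> even (t - d x) \<Longrightarrow> F t x \<ge> 1"
proof (cases "x = v")
  case True
  assume "d x \<le> t" "even (t - d x)"
  then show ?thesis using True unfolding F_def b_def by auto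
next
  case False
  assume A: "x \<in> V" "d x \<le> t" "even (t - d x)"
  then have "d x \<ge> 1" using d0 False by fastforce
  then have "deg_plus V E v x \<ge> 1" using deg_plus_pos A by blast
  then show ?thesis using A False unfolding F_def b_def by auto
qed

lemma neg: "x \<in> V \<Longrightarrow> d x \<le> t \<Longrightarrow> odd (t - d x) \<Longrightarrow> E x y \<Longrightarrow> F t x \<le> 0"
proof -
  assume A: "x \<in> V" "d x \<le> t" "odd (t - d x)" "E x y"
  show ?thesis
  proof (cases "x = v")
    case True
    then have "d y = d x + 1" using nb[OF A(4)] d_v by auto
    then show ?thesis using deg_minus_pos[OF A(4)] A True unfolding F_def b_def by auto
  next
    case False
    then show ?thesis using A unfolding F_def b_def by auto
  qed
qed

lemma F_step: assumes xV: "x \<in> V"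
  shows "F t x - int (card {w \<in> nbrs V E x. F t x > F t w}) + int (card {w \<in> nbrs V E x. F t x < F t w})
     = F (Suc t) x"
proof -
  consider (a) "Suc t < d x" | (b) "Suc t = d x" | (c) "d x \<le> t" "even (t - d x)"
    | (dd) "d x \<le> t" "odd (t - d x)" by linarith
  then show ?thesis
  proof cases
    case a
    have Z: "\<forall>w\<in>nbrs V E x. F t w = 0"
    proof
      fix w assume "w \<in> nbrs V E x"
      then have "E x w" using nbrs_E by blast
      then have "d w = d x + 1 \<or> (d x \<ge> 1 \<and> d w = d x - 1)" using nb by blast
      then have "t < d w" using a by linarith
      then show "F t w = 0" unfolding F_def by simp
    qed
    have X: "F t x = 0" "F (Suc t) x = 0" using a unfolding F_def by auto
    have S: "{w \<in> nbrs V E x. F t x > F t w} = {}" "{w \<in> nbrs V E x. F t x < F t w} = {}"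
      using Z X by auto
    show ?thesis unfolding S using X by simp
  next
    case b
    have Fx: "F t x = 0" using b unfolding F_def by auto
    have H: "\<forall>w\<in>nbrs V E x. (d w = d x - 1 \<and> F t w \<ge> 1) \<or> (d w \<noteq> d x - 1 \<and> F t w = 0)"
    proof
      fix w assume "w \<in> nbrs V E x"
      then have "E x w" using nbrs_E by blast
      then have wV: "w \<in> V" and "d w = d x + 1 \<or> (d x \<ge> 1 \<and> d w = d x - 1)" using nb by blast+
      then consider "d w = d x + 1" | "d w = t" using b by linarith
      then show "(d w = d x - 1 \<and> F t w \<ge> 1) \<or> (d w \<noteq> d x - 1 \<and> F t w = 0)"
      proof cases
        case 1 then show ?thesis using b unfolding F_def by simp
      next
        case 2 then have "F t w \<ge> 1" using pos[OF wV] by simp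
        then show ?thesis using 2 b by simp
      qed
    qed
    have S1: "{w \<in> nbrs V E x. F t x > F t w} = {}" using H Fx by force
    have S2: "{w \<in> nbrs V E x. F t x < F t w} = nbrs V E x \<inter> layer V E v (d x - 1)"
    proof -
      have "nbrs V E x \<subseteq> V" unfolding nbrs_def by blast
      then show ?thesis using H Fx unfolding layer_def by force
    qed
    have "x \<noteq> v" using b d_v by auto
    then have "F (Suc t) x = int (deg_plus V E v x)" using b unfolding F_def b_def by auto
    then show ?thesis unfolding S1 S2 using Fx by (simp add: deg_plus_def)
  next
    case c
    have "\<And>w. w \<in> nbrs V E x \<Longrightarrow> F t w \<le> 0"
    proof -
      fix w assume w: "w \<in> nbrs V E x"
      then have Ew: "E w x" "w \<in> V" using nbrs_E Esym EV by auto
      show "F t w \<le> 0"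
      proof (cases "t < d w")
        case True then show ?thesis unfolding F_def by simp
      next
        case False
        have "odd (t - d w)" using aux2 nb[OF Ew(1)[THEN Esym]] c False by blast
        then show ?thesis using neg[OF Ew(2) _ _ Ew(1)] False by simp
      qed
    qed
    then have H: "\<forall>w\<in>nbrs V E x. F t w \<le> 0" by blast
    have "F t x \<ge> 1" using pos c xV by auto
    then have S1: "{w \<in> nbrs V E x. F t x > F t w} = nbrs V E x"
      and S2: "{w \<in> nbrs V E x. F t x < F t w} = {}" using H by force+
    have "odd (Suc t - d x)" using c aux4 by blast
    then have FS: "F (Suc t) x = b x - int (deg_minus V E v x)" using c unfolding F_def by auto
    have Fx: "F t x = int (deg_plus V E v x) + b x" using c unfolding F_def by auto
    show ?thesis unfolding S1 S2 using FS Fx deg_split[OF xV] by (simp add: degree_def)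
  next
    case dd
    have "\<And>w. w \<in> nbrs V E x \<Longrightarrow> F t w \<ge> 1"
    proof -
      fix w assume w: "w \<in> nbrs V E x"
      then have Ew: "E x w" "w \<in> V" using nbrs_E EV by auto
      have "d w \<le> t" "even (t - d w)" using aux3 nb[OF Ew(1)] dd by blast+
      then show "F t w \<ge> 1" using pos Ew by auto
    qed
    then have H: "\<forall>w\<in>nbrs V E x. F t w \<ge> 1" by blast
    have H2: "nbrs V E x \<noteq> {} \<Longrightarrow> F t x \<le> 0"
      using neg[OF xV dd] nbrs_E by blast
    have S1: "{w \<in> nbrs V E x. F t x > F t w} = {}"
      and S2: "{w \<in> nbrs V E x. F t x < F t w} = nbrs V E x" using H H2 by force+
    have "even (Suc t - d x)" using dd aux5 by blast
    then have FS: "F (Suc t) x = int (deg_plus V E v x) + b x" using dd unfolding F_def by auto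
    have Fx: "F t x = b x - int (deg_minus V E v x)" using dd unfolding F_def by auto
    show ?thesis unfolding S1 S2 using FS Fx deg_split[OF xV] by (simp add: degree_def)
  qed
qed

lemma main: "x \<in> V \<Longrightarrow> diffusion V E (mill_pond v) t x = F t x"
proof (induction t arbitrary: x)
  case 0
  show ?case
  proof (cases "x = v")
    case True then show ?thesis
      unfolding diffusion_def mill_pond_def F_def b_def using d_v deg_plus_v by simp
  next
    case False
    then have "d x \<noteq> 0" using d0 0 by auto
    then show ?thesis using False unfolding diffusion_def mill_pond_def F_def by simp
  qed
next
  case (Suc t)
  have eq: "diffusion V E (mill_pond v) (Suc t) = diffusion_step V E (diffusion V E (mill_pond v) t)"
    unfolding diffusion_def by simp
  have IH: "\<And>w. w \<in> nbrs V E x \<Longrightarrow> diffusion V E (mill_pond v) t w = F t w"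
    unfolding nbrs_def using Suc.IH by auto
  have C1: "{w \<in> nbrs V E x. diffusion V E (mill_pond v) t x > diffusion V E (mill_pond v) t w}
       = {w \<in> nbrs V E x. F t x > F t w}"
    using IH Suc.IH[OF Suc.prems] by auto
  have C2: "{w \<in> nbrs V E x. diffusion V E (mill_pond v) t x < diffusion V E (mill_pond v) t w}
       = {w \<in> nbrs V E x. F t x < F t w}"
    using IH Suc.IH[OF Suc.prems] by auto
  show ?case unfolding eq diffusion_step_def using C1 C2 Suc.IH[OF Suc.prems] F_step[OF Suc.prems]
    by simp
qed

end

theorem theorem20:
  fixes V :: "'a set" and E :: "'a \<Rightarrow> 'a \<Rightarrow> bool" and v :: 'a
  assumes "simple_graph V E" and "connected_graph V E" and "bipartite V E" and "v \<in> V"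
  shows "(\<forall>t. diffusion V E (mill_pond v) t v =
              (if even t then 1 else 1 - int (degree V E v)))
       \<and> (\<forall>i \<in> {1..ecc V E v}. \<forall>x \<in> layer V E v i. \<forall>t.
            diffusion V E (mill_pond v) t x =
              (if t < i then 0
               else if even (t - i) then int (deg_plus V E v x)
               else - int (deg_minus V E v x)))"
proof -
  interpret G V E v using assms by unfold_locales
  have P1: "diffusion V E (mill_pond v) t v = (if even t then 1 else 1 - int (degree V E v))" for t
    using main[OF vV, of t] d_v deg_plus_v deg_split[OF vV] unfolding F_def b_def by simp
  have P2: "diffusion V E (mill_pond v) t x =
              (if t < i then 0
               else if even (t - i) then int (deg_plus V E v x)
               else - int (deg_minus V E v x))"
    if "i \<in> {1..ecc V E v}" "x \<in> layer V E v i" for i x t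
  proof -
    have xV: "x \<in> V" and dx: "dist V E v x = i" using that unfolding layer_def by auto
    have "x \<noteq> v" using dx d_v that by auto
    then show ?thesis using main[OF xV, of t] dx unfolding F_def b_def by simp
  qed
  show ?thesis using P1 P2 by blast
qed

end
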